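(* Let $\lambda\in\mathbb R$, $G_\lambda(x)=\frac{x^3}{8} - \frac{\lambda x^2}{2} + \frac{\lambda^2 x}{2}$, and let $r\ge 0$ be a constant. For integers $k$ with $(1\vee 3\lambda) n^{2/3}\le k \le n^{3/4}$ and $|\lambda|\le n^{1/12}$, \[\frac{1}{n^{2/3}}\sum_{j=k}^{\lfloor n^{3/4}\rfloor} \Big(\frac{j}{n^{2/3}}\Big)^{r} e^{-G_\lambda(j/n^{2/3})} = \frac{(k/n^{2/3})^{r}}{G'_\lambda(k/n^{2/3})} e^{-G_\lambda(k/n^{2/3})} \Big(1+O\big(\tfrac{n^2}{k^3}\big)\Big) + O\big(n^{(r-2)/12}e^{-G_\lambda(n^{1/12})}\big).\]
   Context: $G'_\lambda$ is the derivative of $G_\lambda$; $x\vee y=\max(x,y)$. $f=g(1+O(h))+O(h')$ means $|f-g|\le C|g|h+Ch'$ for a constant $C$ depending only on $r$, for all sufficiently large $n$ and all parameters satisfying the hypotheses. *)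

theory Defs
  imports "HOL-Analysis.Analysis"
begin

definition G :: "real \<Rightarrow> real \<Rightarrow> real" where
  "G lam x = x ^ 3 / 8 - lam * x ^ 2 / 2 + lam ^ 2 * x / 2"

end

theory Submission
  imports Defs
begin


definition Gd :: "real \<Rightarrow> real \<Rightarrow> real" where
  "Gd lam x = 3 * x ^ 2 / 8 - lam * x + lam ^ 2 / 2"
definition Gdd :: "real \<Rightarrow> real \<Rightarrow> real" where
  "Gdd lam x = 3 * x / 4 - lam"

lemma G_deriv: "(G lam has_real_derivative Gd lam x) (at x)"
  unfolding G_def[abs_def] Gd_def
  by (auto intro!: derivative_eq_intros simp: field_simps power2_eq_square power3_eq_cube)

lemma deriv_G: "deriv (G lam) x = Gd lam x"
  using G_deriv DERIV_imp_deriv by blast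

lemma G_deriv_comp: "((\<lambda>y. G lam y) has_real_derivative Gd lam x) (at x)"
  using G_deriv by simp

lemma Gd_deriv: "(Gd lam has_real_derivative Gdd lam x) (at x)"
  unfolding Gdd_def Gd_def[abs_def]
  by (auto intro!: derivative_eq_intros simp: field_simps power2_eq_square)

lemma G_taylor: "G lam y - G lam x - Gd lam x * (y - x) = Gdd lam x * (y - x)^2 / 2 + (y - x)^3 / 8"
  unfolding G_def Gd_def Gdd_def by (simp add: field_simps power2_eq_square power3_eq_cube)

lemma Gd_lower: assumes "3 * lam \<le> x" "0 \<le> x" shows "x^2 + lam^2 \<le> 20 * Gd lam x"
proof -
  define s where "s = x/3 - lam"
  have s: "s \<ge> 0" using assms s_def by auto
  have "20 * Gd lam x - (x^2 + lam^2) = 20 * (x^2/24 + 7/10 * s * x + 9/20 * s^2)"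
    unfolding Gd_def s_def by (simp add: field_simps power2_eq_square)
  moreover have "x^2/24 + 7/10 * s * x + 9/20 * s^2 \<ge> 0" using s assms by simp
  ultimately show ?thesis by argo
qed

lemma Gdd_lower: assumes "3 * lam \<le> x" shows "Gdd lam x \<ge> 5 * x / 12"
  using assms unfolding Gdd_def by simp

lemma Gd_upper: "Gd lam y \<le> 2 * (\<bar>y\<bar> + \<bar>lam\<bar>)^2"
proof -
  have a: "- (lam * y) \<le> \<bar>y\<bar> * \<bar>lam\<bar>" by (metis abs_ge_minus_self abs_mult mult_minus_left mult.commute)
  have b: "y^2 = \<bar>y\<bar>^2" "lam^2 = \<bar>lam\<bar>^2" by simp_all
  have c: "0 \<le> \<bar>y\<bar> * \<bar>lam\<bar>" "0 \<le> \<bar>y\<bar>^2" "0 \<le> \<bar>lam\<bar>^2" by simp_all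
  have d: "(\<bar>y\<bar> + \<bar>lam\<bar>)^2 = \<bar>y\<bar>^2 + \<bar>lam\<bar>^2 + 2 * (\<bar>y\<bar> * \<bar>lam\<bar>)"
    by (simp add: power2_sum)
  show ?thesis unfolding Gd_def d using a b c by argo
qed

lemma G_convex: assumes "3 * lam \<le> x" "x \<le> y" "0 \<le> x"
  shows "G lam y \<ge> G lam x + Gd lam x * (y - x)"
proof -
  have "Gdd lam x \<ge> 0" using Gdd_lower[OF assms(1)] assms by linarith
  hence "Gdd lam x * (y - x)^2 / 2 + (y - x)^3 / 8 \<ge> 0" using assms by simp
  thus ?thesis using G_taylor[of lam y x] by linarith
qed

lemma G_mono: assumes "3 * lam \<le> x" "x \<le> y" "0 \<le> x" shows "G lam x \<le> G lam y"
proof -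
  have "0 \<le> x^2" "0 \<le> lam^2" by simp_all
  hence "Gd lam x \<ge> 0" using Gd_lower[OF assms(1,3)] by linarith
  hence "Gd lam x * (y - x) \<ge> 0" using assms by simp
  thus ?thesis using G_convex[OF assms] by linarith
qed

lemma G_quad: assumes "3 * lam \<le> x" "x \<le> y" "1 \<le> x"
  shows "G lam y \<ge> G lam x + Gd lam x * (y - x) + 5/24 * (y - x)^2"
proof -
  have "Gdd lam x \<ge> 5/12" using Gdd_lower[OF assms(1)] assms by linarith
  hence "Gdd lam x * (y - x)^2 \<ge> 5/12 * (y-x)^2"
    by (intro mult_right_mono) simp_all
  hence "Gdd lam x * (y - x)^2 / 2 \<ge> 5/24 * (y-x)^2" by linarith
  moreover have "(y - x)^3 / 8 \<ge> 0" using assms by simp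
  ultimately show ?thesis using G_taylor[of lam y x] by linarith
qed

lemma G_rev: assumes "3 * lam \<le> x" "x \<le> y" "1 \<le> x" "y - x \<le> 1"
  shows "G lam y - G lam x \<le> Gd lam y * (y - x)"
proof -
  have "Gdd lam y \<ge> 5/12" using Gdd_lower[of lam y] assms by linarith
  have e: "G lam x - G lam y - Gd lam y * (x - y) = Gdd lam y * (x - y)^2 / 2 + (x - y)^3 / 8"
    by (rule G_taylor)
  have e2: "(x-y)^2 = (y-x)^2" "(x-y)^3 = - ((y-x)^2 * (y - x))"
    by (simp_all add: power2_eq_square power3_eq_cube algebra_simps)
  have "(y-x)^2 * (Gdd lam y / 2 - (y - x) / 8) \<ge> 0"
    using \<open>Gdd lam y \<ge> 5/12\<close> assms by (intro mult_nonneg_nonneg) auto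
  moreover have "(y-x)^2 * (Gdd lam y / 2 - (y - x) / 8) = Gdd lam y * (x - y)^2 / 2 + (x - y)^3 / 8"
    unfolding e2 by (simp add: field_simps)
  ultimately have "Gdd lam y * (x - y)^2 / 2 + (x - y)^3 / 8 \<ge> 0" by linarith
  thus ?thesis using e by (simp add: algebra_simps)
qed

definition ff :: "real \<Rightarrow> real \<Rightarrow> real \<Rightarrow> real" where
  "ff r lam y = y powr r * exp (- G lam y)"
definition gg :: "real \<Rightarrow> real \<Rightarrow> real \<Rightarrow> real" where
  "gg r lam y = ff r lam y / Gd lam y"

lemma gg_deriv: assumes "y > 0" "Gd lam y \<noteq> 0"
  shows "(gg r lam has_real_derivative
     ff r lam y * (r / (y * Gd lam y) - 1 - Gdd lam y / (Gd lam y)^2)) (at y)"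
proof -
  have d1: "((\<lambda>y. y powr r) has_real_derivative r * y powr (r - 1)) (at y)"
    using has_real_derivative_powr[OF assms(1)] .
  have d2: "((\<lambda>y. exp (- G lam y)) has_real_derivative exp (- G lam y) * (- Gd lam y)) (at y)"
    by (intro DERIV_fun_exp DERIV_minus G_deriv_comp)
  note d4 = DERIV_divide[OF DERIV_mult[OF d1 d2] Gd_deriv assms(2)]
  have pr: "y powr (r - 1) = y powr r / y" using assms by (simp add: powr_diff)
  show ?thesis unfolding gg_def[abs_def] ff_def[abs_def]
    by (rule DERIV_cong[OF d4]) (use assms in \<open>simp add: pr field_simps power2_eq_square\<close>)
qed

lemma delta_bound: assumes "1 \<le> y" "3 * lam \<le> y" "r \<ge> 0"
  shows "\<bar>Gdd lam y / (Gd lam y)^2 - r / (y * Gd lam y)\<bar> \<le> (800 + 20 * r) / y^3"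
proof -
  define Q where "Q = y^2 + lam^2"
  have Gl: "Q \<le> 20 * Gd lam y" using Gd_lower[OF assms(2)] assms Q_def by simp
  have Qy: "Q \<ge> y^2" unfolding Q_def by simp
  have y2: "y^2 \<ge> 1" using assms by simp
  have Qp: "Q > 0" using Qy y2 by linarith
  have Gp: "Gd lam y > 0" using Gl Qp by linarith
  have a1: "\<bar>Gdd lam y\<bar> \<le> 3 * y / 4 + \<bar>lam\<bar>" unfolding Gdd_def using assms by linarith
  have a2: "(3 * y / 4 + \<bar>lam\<bar>) * y \<le> 2 * Q"
  proof -
    have "0 \<le> (\<bar>lam\<bar> - y)^2" by simp
    moreover have "(\<bar>lam\<bar> - y)^2 = \<bar>lam\<bar>^2 - 2 * (\<bar>lam\<bar> * y) + y^2"
      by (simp add: power2_diff)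
    moreover have "\<bar>lam\<bar>^2 = lam^2" by simp
    ultimately have "2 * (\<bar>lam\<bar> * y) \<le> y^2 + lam^2" by linarith
    moreover have "(3 * y / 4 + \<bar>lam\<bar>) * y = 3/4 * y^2 + \<bar>lam\<bar> * y"
      by (simp add: algebra_simps power2_eq_square)
    moreover have "0 \<le> y^2" "0 \<le> lam^2" by simp_all
    ultimately show ?thesis unfolding Q_def by argo
  qed
  have a3: "\<bar>Gdd lam y\<bar> * y^3 \<le> 2 * Q^2"
  proof -
    have "\<bar>Gdd lam y\<bar> * y^3 = (\<bar>Gdd lam y\<bar> * y) * y^2" by (simp add: power2_eq_square power3_eq_cube)
    also have "\<dots> \<le> (2 * Q) * Q"
    proof -
      have g1: "\<bar>Gdd lam y\<bar> * y \<le> (3 * y / 4 + \<bar>lam\<bar>) * y" using a1 assms by (intro mult_right_mono) auto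
      have g2: "\<bar>Gdd lam y\<bar> * y \<le> 2 * Q" using g1 a2 by linarith
      show ?thesis by (rule mult_mono[OF g2 Qy]) (use Qp in auto)
    qed
    finally show ?thesis by (simp add: power2_eq_square)
  qed
  have b1: "\<bar>Gdd lam y / (Gd lam y)^2\<bar> \<le> 800 / y^3"
  proof -
    have "Q^2 \<le> 400 * (Gd lam y)^2"
    proof -
      have "Q \<le> 20 * Gd lam y" using Gl by simp
      hence "Q^2 \<le> (20 * Gd lam y)^2" using Qp by (intro power_mono) auto
      thus ?thesis by (simp add: power_mult_distrib)
    qed
    hence "\<bar>Gdd lam y\<bar> * y^3 \<le> 800 * (Gd lam y)^2" using a3 by linarith
    thus ?thesis using Gp assms by (simp add: field_simps abs_divide)
  qed
  have b2: "\<bar>r / (y * Gd lam y)\<bar> \<le> 20 * r / y^3"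
  proof -
    have "y^2 \<le> 20 * Gd lam y" using Gl Qy by linarith
    hence "y * y^2 \<le> y * (20 * Gd lam y)" using assms by (intro mult_left_mono) auto
    hence "r * (y * y^2) \<le> r * (y * (20 * Gd lam y))" using assms by (intro mult_left_mono) auto
    moreover have "y^3 = y * y^2" by (simp add: power3_eq_cube power2_eq_square)
    ultimately have "r * y^3 \<le> 20 * r * (y * Gd lam y)" by (simp add: algebra_simps)
    thus ?thesis using Gp assms by (simp add: field_simps abs_divide)
  qed
  have "\<bar>Gdd lam y / (Gd lam y)^2 - r / (y * Gd lam y)\<bar> \<le> 800 / y^3 + 20 * r / y^3"
    using b1 b2 by linarith
  thus ?thesis by (simp add: add_divide_distrib)
qed

lemma exp_neg_le: fixes v :: real assumes "0 \<le> v" shows "exp (- v) \<le> 1 / (1 + v)"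
proof -
  have "1 + v \<le> exp v" by simp
  hence "1 / exp v \<le> 1 / (1 + v)" using assms by (intro divide_left_mono) auto
  thus ?thesis by (simp add: exp_minus field_simps)
qed

lemma one_minus_exp: fixes v :: real assumes "0 \<le> v" "v \<le> 1" shows "1 - exp (- v) \<ge> v / 2"
proof -
  have "exp (- v) \<le> 1 / (1 + v)" by (rule exp_neg_le[OF assms(1)])
  moreover have "v * v \<le> v" using assms mult_left_le by blast
  hence "1 - 1 / (1 + v) \<ge> v / 2" using assms by (simp add: field_simps)
  ultimately show ?thesis by linarith
qed

lemma exp_small: fixes t :: real assumes "\<bar>t\<bar> \<le> 1/2" shows "\<bar>exp t - 1\<bar> \<le> 2 * \<bar>t\<bar>" and "exp t \<le> 2"
proof -
  have lo: "exp t - 1 \<ge> t" using exp_ge_add_one_self[of t] by linarith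
  have "exp (- t) \<ge> 1 - t" using exp_ge_add_one_self[of "-t"] by linarith
  hence "1 / exp (- t) \<le> 1 / (1 - t)" using assms by (intro divide_left_mono) auto
  hence up: "exp t \<le> 1 / (1 - t)" by (simp add: exp_minus divide_inverse)
  have "1 / (1 - t) - 1 \<le> 2 * \<bar>t\<bar>"
  proof (cases "t \<ge> 0")
    case True
    hence "t * (t * 2) \<le> t * 1" using assms by (intro mult_left_mono) auto
    thus ?thesis using assms True by (auto simp: field_simps abs_if)
  next
    case False
    thus ?thesis using assms by (auto simp: field_simps abs_if)
  qed
  with up lo show "\<bar>exp t - 1\<bar> \<le> 2 * \<bar>t\<bar>" by (auto simp: abs_if)
  have t2: "1 - t \<ge> 1/2" using assms by (simp add: abs_le_iff)
  hence "1 / (1 - t) \<le> 2" by (simp add: divide_le_eq)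
  thus "exp t \<le> 2" using up by linarith
qed

lemma powr_ratio_le: fixes x y r :: real assumes "1 \<le> x" "x \<le> y" "0 \<le> r"
  shows "y powr r \<le> x powr r * exp (r * (y - x))"
proof -
  have xp: "x > 0" using assms by simp
  have yx: "y = x * (y / x)" using xp by simp
  have "y powr r = x powr r * (y / x) powr r"
    using powr_mult[of x "y/x" r] assms xp by simp
  moreover have "(y / x) powr r = exp (r * ln (y / x))"
    using xp assms by (simp add: powr_def)
  moreover have "ln (y / x) \<le> y - x"
  proof -
    have "ln (y / x) \<le> y / x - 1" using xp assms by (intro ln_le_minus_one) simp
    also have "y / x - 1 = (y - x) / x" using xp by (simp add: field_simps)
    also have "\<dots> \<le> y - x" using assms by (simp add: divide_le_eq mult_le_cancel_left1 mult_left_mono)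
    finally show ?thesis .
  qed
  hence "exp (r * ln (y / x)) \<le> exp (r * (y - x))" using assms by (simp add: mult_left_mono)
  moreover have "x powr r \<ge> 0" by simp
  ultimately show ?thesis by (simp add: mult_left_mono)
qed

lemma P1: assumes "0 \<le> r" "1 \<le> x" "3 * lam \<le> x" "x \<le> y"
  shows "ff r lam y \<le> ff r lam x * exp (6 * r^2 / 5) * exp (- Gd lam x * (y - x))"
proof -
  define t where "t = y - x"
  have t0: "t \<ge> 0" using assms t_def by simp
  have a: "y powr r \<le> x powr r * exp (r * t)" using powr_ratio_le[OF assms(2,4,1)] t_def by simp
  have b: "G lam y \<ge> G lam x + Gd lam x * t + 5/24 * t^2" using G_quad[OF assms(3,4,2)] t_def by simp
  have c: "r * t - 5/24 * t^2 \<le> 6 * r^2 / 5"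
  proof -
    have "6 * r^2 / 5 - (r * t - 5/24 * t^2) = 5/24 * (t - 12 * r / 5)^2"
      by (simp add: power2_eq_square algebra_simps)
    moreover have "5/24 * (t - 12 * r / 5)^2 \<ge> 0" by simp
    ultimately show ?thesis by linarith
  qed
  have "ff r lam y = y powr r * exp (- G lam y)" by (simp add: ff_def)
  also have "\<dots> \<le> (x powr r * exp (r * t)) * exp (- (G lam x + Gd lam x * t + 5/24 * t^2))"
    using a b by (intro mult_mono) auto
  also have "\<dots> = x powr r * exp (- G lam x) * exp (r * t - 5/24 * t^2) * exp (- Gd lam x * t)"
  proof -
    have "exp (r * t) * exp (- (G lam x + Gd lam x * t + 5/24 * t^2))
        = exp (- G lam x) * exp (r * t - 5/24 * t^2) * exp (- Gd lam x * t)"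
      unfolding mult_exp_exp by (simp add: algebra_simps)
    thus ?thesis by (simp only: mult.assoc)
  qed
  also have "\<dots> \<le> x powr r * exp (- G lam x) * exp (6 * r^2 / 5) * exp (- Gd lam x * t)"
    using c by (intro mult_right_mono mult_left_mono) auto
  finally show ?thesis by (simp add: ff_def t_def)
qed

lemma Gd_pos: assumes "1 \<le> y" "3 * lam \<le> y" shows "Gd lam y > 0"
proof -
  have "y^2 + lam^2 \<le> 20 * Gd lam y" using Gd_lower[OF assms(2)] assms by simp
  moreover have "y^2 \<ge> 1" using assms by simp
  moreover have "lam^2 \<ge> 0" by simp
  ultimately show ?thesis by linarith
qed

lemma P3: assumes r0: "0 \<le> r" and x1: "1 \<le> x" and lx: "3 * lam \<le> x" and xa: "x \<le> a"
  and h0: "0 < hh" and h1: "hh \<le> 1" and M: "\<And>z. a \<le> z \<Longrightarrow> z \<le> a + hh \<Longrightarrow> Gd lam z \<le> M"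
  and rM: "(r + M) * hh \<le> 1/2"
  shows "\<bar>hh * ff r lam a - (gg r lam a - gg r lam (a + hh))\<bar>
     \<le> hh * ff r lam a * (2 * (r + M) * hh + 2 * (800 + 20 * r) / x^3)"
proof -
  define D where "D = (\<lambda>y. ff r lam y * (r / (y * Gd lam y) - 1 - Gdd lam y / (Gd lam y)^2))"
  have der: "\<And>y. a \<le> y \<Longrightarrow> y \<le> a + hh \<Longrightarrow> DERIV (gg r lam) y :> D y"
  proof -
    fix y assume "a \<le> y" "y \<le> a + hh"
    hence "1 \<le> y" "3 * lam \<le> y" using x1 xa lx by linarith+
    thus "DERIV (gg r lam) y :> D y" unfolding D_def
      using gg_deriv[of y lam r] Gd_pos[of y lam] by simp
  qed
  obtain z where z: "a < z" "z < a + hh" "gg r lam (a + hh) - gg r lam a = (a + hh - a) * D z"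
    using MVT2[of a "a + hh" "gg r lam" D] der h0 by auto
  have z1: "1 \<le> z" "3 * lam \<le> z" "x \<le> z" using z x1 xa lx by linarith+
  have a1: "1 \<le> a" "3 * lam \<le> a" using x1 xa lx by linarith+
  have zp: "z > 0" "a > 0" using z1 a1 by linarith+
  have Gzp: "Gd lam z > 0" using Gd_pos[OF z1(1,2)] .
  define d where "d = Gdd lam z / (Gd lam z)^2 - r / (z * Gd lam z)"
  have Dz: "D z = - ff r lam z * (1 + d)" unfolding D_def d_def by (simp add: algebra_simps)
  have dbound: "\<bar>d\<bar> \<le> (800 + 20 * r) / x^3"
  proof -
    have "\<bar>d\<bar> \<le> (800 + 20 * r) / z^3" unfolding d_def by (rule delta_bound[OF z1(1,2) r0])
    also have "\<dots> \<le> (800 + 20 * r) / x^3"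
      using z1 x1 r0 by (intro divide_left_mono power_mono mult_pos_pos) auto
    finally show ?thesis .
  qed
  define tt where "tt = r * ln (z / a) - (G lam z - G lam a)"
  have ffz: "ff r lam z = ff r lam a * exp tt"
  proof -
    have l: "r * ln z = r * ln a + r * ln (z / a)" using zp by (simp add: ln_div algebra_simps)
    have "r * ln z + - G lam z = (r * ln a + - G lam a) + tt" unfolding tt_def l by simp
    hence "exp (r * ln z) * exp (- G lam z) = (exp (r * ln a) * exp (- G lam a)) * exp tt"
      by (simp only: mult_exp_exp)
    thus ?thesis unfolding ff_def using zp by (simp add: powr_def)
  qed
  have ttb: "\<bar>tt\<bar> \<le> (r + M) * hh"
  proof -
    have l0: "ln (z / a) \<ge> 0" using zp z by simp
    have "ln (z / a) \<le> z / a - 1" using zp by (intro ln_le_minus_one) simp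
    also have "z / a - 1 = (z - a) / a" using zp by (simp add: field_simps)
    also have "\<dots> \<le> z - a" using a1 z by (simp add: divide_le_eq mult_le_cancel_left1 mult_left_mono)
    finally have l1: "ln (z / a) \<le> hh" using z by linarith
    have g0: "G lam z - G lam a \<ge> 0" using G_mono[OF a1(2)] z a1 by force
    have "G lam z - G lam a \<le> Gd lam z * (z - a)" using G_rev[OF a1(2) _ a1(1)] z h1 by force
    also have "\<dots> \<le> M * hh" using M[of z] z Gzp by (intro mult_mono) auto
    finally have g1: "G lam z - G lam a \<le> M * hh" .
    have "r * ln (z / a) \<le> r * hh" using l1 r0 by (simp add: mult_left_mono)
    moreover have "r * ln (z / a) \<ge> 0" using l0 r0 by simp
    ultimately show ?thesis unfolding tt_def using g0 g1 by (auto simp: abs_if algebra_simps)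
  qed
  have tth: "\<bar>tt\<bar> \<le> 1/2" using ttb rM by linarith
  have e1: "\<bar>exp tt - 1\<bar> \<le> 2 * \<bar>tt\<bar>" and e2: "exp tt \<le> 2" using exp_small[OF tth] by auto
  have eq: "hh * ff r lam a - (gg r lam a - gg r lam (a + hh))
       = hh * ff r lam a * ((1 - exp tt) - exp tt * d)"
    using z(3) unfolding Dz ffz by (simp add: algebra_simps)
  have "\<bar>(1 - exp tt) - exp tt * d\<bar> \<le> \<bar>1 - exp tt\<bar> + \<bar>exp tt * d\<bar>"
    by (rule abs_triangle_ineq4)
  also have "\<bar>1 - exp tt\<bar> = \<bar>exp tt - 1\<bar>" by (rule abs_minus_commute)
  also have "\<bar>exp tt * d\<bar> = exp tt * \<bar>d\<bar>" by (simp add: abs_mult)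
  finally have "\<bar>(1 - exp tt) - exp tt * d\<bar> \<le> \<bar>exp tt - 1\<bar> + exp tt * \<bar>d\<bar>" .
  also have "\<dots> \<le> 2 * \<bar>tt\<bar> + 2 * \<bar>d\<bar>"
    using e1 e2 by (intro add_mono mult_right_mono) auto
  also have "\<dots> \<le> 2 * (r + M) * hh + 2 * (800 + 20 * r) / x^3"
    using ttb dbound by linarith
  finally have B: "\<bar>(1 - exp tt) - exp tt * d\<bar> \<le> 2 * (r + M) * hh + 2 * (800 + 20 * r) / x^3" .
  have ffa: "ff r lam a \<ge> 0" unfolding ff_def by simp
  show ?thesis unfolding eq abs_mult using B ffa h0
    by (simp add: mult_left_mono)
qed

lemma geom_bound: fixes q :: real assumes "0 \<le> q" "q < 1" "k \<le> J"
  shows "(\<Sum>j = k..J. q ^ (j - k)) \<le> 1 / (1 - q)"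
proof -
  have "(\<Sum>j = k..J. q ^ (j - k)) = (\<Sum>j = 0 + k..(J - k) + k. q ^ (j - k))" using assms by simp
  also have "\<dots> = (\<Sum>i = 0..J - k. q ^ i)" by (subst sum.shift_bounds_cl_nat_ivl) simp
  also have "\<dots> = (\<Sum>i < Suc (J - k). q ^ i)" by (simp add: atLeast0AtMost lessThan_Suc_atMost)
  also have "\<dots> = (1 - q ^ Suc (J - k)) / (1 - q)" by (simp only: sum_gp_strict) (use assms in simp)
  also have "\<dots> \<le> 1 / (1 - q)" using assms by (intro divide_right_mono) auto
  finally show ?thesis .
qed

lemma tail_bound: assumes r0: "0 \<le> r" and w1: "1 \<le> w" and lw: "3 * lam \<le> w"
  and y: "w \<le> y" "y \<le> 2 * w"
  shows "gg r lam y \<le> 20 * 2 powr r * w powr (r - 2) * exp (- G lam w)"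
proof -
  have y1: "1 \<le> y" "3 * lam \<le> y" using y w1 lw by linarith+
  have Gl: "Gd lam y \<ge> w^2 / 20"
  proof -
    have "y^2 + lam^2 \<le> 20 * Gd lam y" using Gd_lower[OF y1(2)] y1 by simp
    moreover have "y^2 \<ge> w^2" using y w1 by (intro power_mono) auto
    moreover have "lam^2 \<ge> 0" by simp
    ultimately show ?thesis by linarith
  qed
  have w2: "w^2 > 0" using w1 by simp
  have p1: "y powr r \<le> 2 powr r * w powr r"
  proof -
    have "y powr r \<le> (2 * w) powr r" using y y1 r0 by (intro powr_mono2) auto
    also have "\<dots> = 2 powr r * w powr r" using w1 by (simp add: powr_mult)
    finally show ?thesis .
  qed
  have e1: "exp (- G lam y) \<le> exp (- G lam w)" using G_mono[OF lw y(1)] w1 by simp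
  have "gg r lam y = y powr r * exp (- G lam y) / Gd lam y" by (simp add: gg_def ff_def)
  also have "\<dots> \<le> (2 powr r * w powr r) * exp (- G lam w) / (w^2 / 20)"
    using p1 e1 Gl w2 by (intro frac_le mult_mono) auto
  also have "\<dots> = 20 * 2 powr r * (w powr r / w powr 2) * exp (- G lam w)"
    using w1 by (simp add: powr_numeral field_simps)
  also have "w powr r / w powr 2 = w powr (r - 2)" using w1 by (simp add: powr_diff)
  finally show ?thesis by simp
qed

lemma MAIN:
  fixes r lam m w eta :: real and k J :: nat
  assumes r0: "0 \<le> r" and m0: "0 < m" and kJ: "k \<le> J"
  and x1: "1 \<le> real k / m" and lx: "3 * lam \<le> real k / m" and lw: "\<bar>lam\<bar> \<le> w" and w1: "1 \<le> w"
  and Jw: "real J / m \<le> w" and wJ: "w < real (Suc J) / m"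
  and wh: "w^2 / m \<le> eta" and et: "eta * (r + 18) \<le> 1/2" and w3: "w^3 * eta \<le> 1"
  shows "\<bar>(1/m) * (\<Sum>j=k..J. ff r lam (real j / m)) - gg r lam (real k / m)\<bar>
   \<le> (2 * exp (6*r^2/5) * (2*(r+18) + 2*(800+20*r))) * gg r lam (real k/m) / (real k/m)^3
     + (20 * 2 powr r) * w powr (r - 2) * exp (- G lam w)"
proof -
  define h where "h = 1 / m"
  define x where "x = real k / m"
  define xs where "xs = (\<lambda>j::nat. real j / m)"
  define K where "K = 6 * r^2 / 5"
  define E where "E = 2*(r+18) + 2*(800+20*r)"
  define S0 where "S0 = (1/m) * (\<Sum>j=k..J. ff r lam (xs j))"
  have h0: "h > 0" using m0 h_def by simp
  have w2: "w^2 \<ge> 1" using w1 by simp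
  have wh': "w^2 * h \<le> eta" using wh h_def by simp
  have hle: "h \<le> w^2 * h" using w2 h0 by simp
  have heta: "h \<le> eta" using hle wh' by linarith
  have eta0: "eta > 0" using h0 heta by linarith
  have "eta * 18 \<le> eta * (r + 18)" using eta0 r0 by (intro mult_left_mono) auto
  hence eta1: "eta \<le> 1/36" using et by linarith
  have h1: "h \<le> 1" using heta eta1 by linarith
  have xw: "x \<le> w"
  proof -
    have "x \<le> real J / m" unfolding x_def using kJ m0 by (simp add: divide_right_mono)
    thus ?thesis using Jw by linarith
  qed
  have x0: "x > 0" using x1 x_def by simp
  have x3: "x^3 \<le> w^3" using xw x0 by (intro power_mono) auto
  have etax: "eta \<le> 1 / x^3"
  proof -
    have "x^3 * eta \<le> w^3 * eta" using x3 eta0 by (intro mult_right_mono) auto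
    hence "x^3 * eta \<le> 1" using w3 by linarith
    thus ?thesis using x0 by (simp add: field_simps)
  qed
  have xsS: "\<And>j. xs (Suc j) = xs j + h" unfolding xs_def h_def by (simp add: add_divide_distrib)
  have xsk: "xs k = x" unfolding xs_def x_def by simp
  have xsge: "\<And>j. k \<le> j \<Longrightarrow> x \<le> xs j" unfolding xs_def x_def using m0 by (simp add: divide_right_mono)
  have xsle: "\<And>j. j \<le> J \<Longrightarrow> xs j \<le> w"
  proof -
    fix j :: nat assume "j \<le> J"
    hence "real j / m \<le> real J / m" using m0 by (intro divide_right_mono) auto
    thus "xs j \<le> w" unfolding xs_def using Jw by linarith
  qed
  have x1': "1 \<le> x" "3 * lam \<le> x" using x1 lx x_def by auto
  have Gdx: "Gd lam x > 0" using Gd_pos[OF x1'] .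
  have Gdx8: "Gd lam x \<le> 8 * w^2"
  proof -
    have "Gd lam x \<le> 2 * (\<bar>x\<bar> + \<bar>lam\<bar>)^2" by (rule Gd_upper)
    also have "\<dots> \<le> 2 * (2 * w)^2" using xw x0 lw by (intro mult_left_mono power_mono) auto
    finally show ?thesis by (simp add: power_mult_distrib)
  qed
  define v where "v = Gd lam x * h"
  define q where "q = exp (- v)"
  have v0: "v > 0" unfolding v_def using Gdx h0 by simp
  have v1: "v \<le> 1"
  proof -
    have "v \<le> 8 * w^2 * h" unfolding v_def using Gdx8 h0 by (simp add: mult_right_mono)
    also have "\<dots> \<le> 8 * eta" using wh' by linarith
    finally show ?thesis using eta1 by linarith
  qed
  have q0: "0 \<le> q" "q < 1" unfolding q_def using v0 by auto
  have omq: "1 - q \<ge> v / 2" unfolding q_def using one_minus_exp v0 v1 by simp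
  have pw: "\<And>j. j \<in> {k..J} \<Longrightarrow> ff r lam (xs j) \<le> ff r lam x * exp K * q ^ (j - k)"
  proof -
    fix j assume j: "j \<in> {k..J}"
    have "ff r lam (xs j) \<le> ff r lam x * exp K * exp (- Gd lam x * (xs j - x))"
      unfolding K_def using P1[OF r0 x1' xsge] j by auto
    moreover have "xs j - x = real (j - k) * h"
      using j unfolding xs_def x_def h_def by (auto simp: of_nat_diff diff_divide_distrib)
    moreover have "exp (- Gd lam x * (real (j - k) * h)) = q ^ (j - k)"
      unfolding q_def v_def by (simp add: exp_of_nat_mult[symmetric] algebra_simps)
    ultimately show "ff r lam (xs j) \<le> ff r lam x * exp K * q ^ (j - k)" by simp
  qed
  have ffx0: "ff r lam x \<ge> 0" unfolding ff_def by simp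
  have S0b: "S0 \<le> 2 * exp K * gg r lam x"
  proof -
    have "(\<Sum>j=k..J. ff r lam (xs j)) \<le> (\<Sum>j=k..J. ff r lam x * exp K * q ^ (j - k))"
      using pw by (rule sum_mono)
    also have "\<dots> = ff r lam x * exp K * (\<Sum>j=k..J. q ^ (j - k))" by (simp add: sum_distrib_left)
    also have "\<dots> \<le> ff r lam x * exp K * (1 / (1 - q))"
      using geom_bound[OF q0 kJ] ffx0 by (intro mult_left_mono) auto
    also have "\<dots> \<le> ff r lam x * exp K * (2 / v)"
      using omq v0 ffx0 by (intro mult_left_mono) (auto simp: field_simps)
    finally have "(\<Sum>j=k..J. ff r lam (xs j)) \<le> ff r lam x * exp K * (2 / v)" .
    hence "S0 \<le> h * (ff r lam x * exp K * (2 / v))" unfolding S0_def h_def using m0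
      by (intro mult_left_mono) auto
    also have "\<dots> = 2 * exp K * gg r lam x" unfolding v_def gg_def using h0 Gdx by (simp add: field_simps)
    finally show ?thesis .
  qed
  define T where "T = (\<lambda>j. gg r lam (xs j) - gg r lam (xs (Suc j)))"
  have tele: "(\<Sum>j=k..J. T j) = gg r lam x - gg r lam (xs (Suc J))"
  proof -
    have "(\<Sum>j=k..J. gg r lam (xs (Suc j)) - gg r lam (xs j)) = gg r lam (xs (Suc J)) - gg r lam (xs k)"
      using kJ by (intro sum_Suc_diff) simp
    moreover have "(\<Sum>j=k..J. gg r lam (xs (Suc j)) - gg r lam (xs j))
       = (\<Sum>j=k..J. gg r lam (xs (Suc j))) - (\<Sum>j=k..J. gg r lam (xs j))" by (rule sum_subtractf)
    moreover have "(\<Sum>j=k..J. T j) = (\<Sum>j=k..J. gg r lam (xs j)) - (\<Sum>j=k..J. gg r lam (xs (Suc j)))"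
      unfolding T_def by (rule sum_subtractf)
    ultimately show ?thesis unfolding xsk by linarith
  qed
  have pt: "\<And>j. j \<in> {k..J} \<Longrightarrow> \<bar>h * ff r lam (xs j) - T j\<bar> \<le> h * ff r lam (xs j) * (E / x^3)"
  proof -
    fix j assume j: "j \<in> {k..J}"
    have M: "\<And>z. xs j \<le> z \<Longrightarrow> z \<le> xs j + h \<Longrightarrow> Gd lam z \<le> 18 * w^2"
    proof -
      fix z assume z: "xs j \<le> z" "z \<le> xs j + h"
      have "z \<ge> 0" using z xsge[of j] j x0 by auto
      moreover have "z \<le> 2 * w" using z xsle[of j] j h1 w1 by auto
      ultimately have "\<bar>z\<bar> + \<bar>lam\<bar> \<le> 3 * w" "0 \<le> \<bar>z\<bar> + \<bar>lam\<bar>" using lw by auto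
      hence "(\<bar>z\<bar> + \<bar>lam\<bar>)^2 \<le> (3 * w)^2" by (intro power_mono) auto
      thus "Gd lam z \<le> 18 * w^2" using Gd_upper[of lam z] by (simp add: power_mult_distrib)
    qed
    have rM: "(r + 18 * w^2) * h \<le> 1/2"
    proof -
      have "r * h \<le> r * eta" using heta r0 by (simp add: mult_left_mono)
      moreover have "18 * w^2 * h \<le> 18 * eta" using wh' by linarith
      ultimately show ?thesis using et by (simp add: algebra_simps)
    qed
    have "\<bar>h * ff r lam (xs j) - (gg r lam (xs j) - gg r lam (xs j + h))\<bar>
       \<le> h * ff r lam (xs j) * (2 * (r + 18 * w^2) * h + 2 * (800 + 20 * r) / x^3)"
      by (rule P3[OF r0 x1' xsge h0 h1 M rM]) (use j in auto)
    moreover have "2 * (r + 18 * w^2) * h + 2 * (800 + 20 * r) / x^3 \<le> E / x^3"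
    proof -
      have "2 * (r + 18 * w^2) * h \<le> 2 * (r + 18) * eta"
      proof -
        have "r * h \<le> r * eta" using heta r0 by (simp add: mult_left_mono)
        thus ?thesis using wh' by (simp add: algebra_simps)
      qed
      also have "\<dots> \<le> 2 * (r + 18) * (1 / x^3)" using etax r0 by (intro mult_left_mono) auto
      finally show ?thesis unfolding E_def by (simp add: add_divide_distrib)
    qed
    moreover have "h * ff r lam (xs j) \<ge> 0" using h0 unfolding ff_def by simp
    ultimately show "\<bar>h * ff r lam (xs j) - T j\<bar> \<le> h * ff r lam (xs j) * (E / x^3)"
      unfolding T_def xsS by (meson mult_left_mono order_trans)
  qed
  have S0sum: "S0 = (\<Sum>j=k..J. h * ff r lam (xs j))" unfolding S0_def h_def by (simp add: sum_distrib_left)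
  have E0: "E / x^3 \<ge> 0" unfolding E_def using r0 x0 by simp
  have P4: "\<bar>S0 - (gg r lam x - gg r lam (xs (Suc J)))\<bar> \<le> (E / x^3) * (2 * exp K * gg r lam x)"
  proof -
    have "S0 - (gg r lam x - gg r lam (xs (Suc J))) = (\<Sum>j=k..J. h * ff r lam (xs j) - T j)"
      unfolding S0sum tele[symmetric] by (simp add: sum_subtractf)
    hence "\<bar>S0 - (gg r lam x - gg r lam (xs (Suc J)))\<bar> \<le> (\<Sum>j=k..J. \<bar>h * ff r lam (xs j) - T j\<bar>)"
      by (simp add: sum_abs)
    also have "\<dots> \<le> (\<Sum>j=k..J. h * ff r lam (xs j) * (E / x^3))" using pt by (rule sum_mono)
    also have "\<dots> = (E / x^3) * S0" unfolding S0sum by (simp add: sum_distrib_left mult.commute)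
    also have "\<dots> \<le> (E / x^3) * (2 * exp K * gg r lam x)" using S0b E0 by (rule mult_left_mono)
    finally show ?thesis .
  qed
  have y: "w \<le> xs (Suc J)" "xs (Suc J) \<le> 2 * w"
    using wJ xsS[of J] xsle[of J] h1 w1 unfolding xs_def by auto
  have lw3: "3 * lam \<le> w" using x1' xw by linarith
  have tb: "gg r lam (xs (Suc J)) \<le> 20 * 2 powr r * w powr (r - 2) * exp (- G lam w)"
    by (rule tail_bound[OF r0 w1 lw3 y])
  have tb0: "gg r lam (xs (Suc J)) \<ge> 0"
    using Gd_pos[of "xs (Suc J)" lam] y w1 lw3 unfolding gg_def ff_def by simp
  have "\<bar>S0 - gg r lam x\<bar> \<le> (E / x^3) * (2 * exp K * gg r lam x) + gg r lam (xs (Suc J))"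
    using P4 tb0 by linarith
  also have "\<dots> \<le> (2 * exp K * E) * gg r lam x / x^3 + 20 * 2 powr r * w powr (r - 2) * exp (- G lam w)"
    using tb by (simp add: field_simps)
  finally show ?thesis unfolding S0_def xs_def x_def K_def E_def by (simp add: mult.assoc)
qed

lemma powr_pow': "0 < (x::real) \<Longrightarrow> (x powr a) ^ k = x powr (real k * a)"
  using powr_power[of x a k] by simp

theorem lemma5p3:
  fixes r :: real
  assumes "r \<ge> 0"
  shows "\<exists>C N. \<forall>n::nat. \<forall>lam::real. \<forall>k::nat.
    n \<ge> N \<longrightarrow>
    max 1 (3 * lam) * real n powr (2/3) \<le> real k \<longrightarrow>
    real k \<le> real n powr (3/4) \<longrightarrow>
    \<bar>lam\<bar> \<le> real n powr (1/12) \<longrightarrow>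
    (let m = real n powr (2/3);
         S = (1 / m) * (\<Sum>j = k..nat \<lfloor>real n powr (3/4)\<rfloor>.
                 (real j / m) powr r * exp (- G lam (real j / m)));
         g = (real k / m) powr r / deriv (G lam) (real k / m) * exp (- G lam (real k / m))
     in \<bar>S - g\<bar> \<le> C * \<bar>g\<bar> * (real n ^ 2 / real k ^ 3)
            + C * real n powr ((r - 2) / 12) * exp (- G lam (real n powr (1/12))))"
proof -
  define A where "A = 2 * exp (6*r^2/5) * (2*(r+18) + 2*(800+20*r))"
  define B where "B = 20 * 2 powr r"
  define C where "C = max A B"
  define N where "N = nat \<lceil>(2 * (r + 18))^2\<rceil> + 1"
  have r0: "0 \<le> r" using assms .
  have CA: "A \<le> C" and CB: "B \<le> C" unfolding C_def by auto
  have A0: "A \<ge> 0" unfolding A_def using r0 by simp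
  have B0: "B \<ge> 0" unfolding B_def by simp
  show ?thesis
  proof (intro exI allI impI)
    fix n :: nat and lam :: real and k :: nat
    assume nN: "N \<le> n" and h1: "max 1 (3 * lam) * real n powr (2/3) \<le> real k"
      and h2: "real k \<le> real n powr (3/4)" and h3: "\<bar>lam\<bar> \<le> real n powr (1/12)"
    define nn where "nn = real n"
    define m where "m = nn powr (2/3)"
    define w where "w = nn powr (1/12)"
    define eta where "eta = nn powr (-1/2)"
    define J where "J = nat \<lfloor>nn powr (3/4)\<rfloor>"
    have n1: "nn \<ge> 1" using nN unfolding N_def nn_def by simp
    have nbig: "nn \<ge> (2 * (r + 18))^2"
    proof -
      have "(2 * (r + 18))^2 \<le> real (nat \<lceil>(2 * (r + 18))^2\<rceil>)" by linarith
      also have "\<dots> \<le> nn" using nN unfolding N_def nn_def by simp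
      finally show ?thesis .
    qed
    have np: "nn > 0" using n1 by simp
    have m0: "m > 0" unfolding m_def using np by simp
    have w1: "1 \<le> w" unfolding w_def using n1 by (intro ge_one_powr_ge_zero) auto
    have kJ: "k \<le> J" unfolding J_def using h2 nn_def by (intro le_nat_floor) simp
    have mk: "max 1 (3 * lam) * m \<le> real k" using h1 unfolding m_def nn_def .
    have x1: "1 \<le> real k / m"
    proof -
      have "1 * m \<le> max 1 (3 * lam) * m" using m0 by (intro mult_right_mono) auto
      hence "m \<le> real k" using mk by linarith
      thus ?thesis using m0 by (simp add: le_divide_eq)
    qed
    have lx: "3 * lam \<le> real k / m"
    proof -
      have "3 * lam * m \<le> max 1 (3 * lam) * m" using m0 by (intro mult_right_mono) auto
      hence "3 * lam * m \<le> real k" using mk by linarith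
      thus ?thesis using m0 by (simp add: le_divide_eq)
    qed
    have lw: "\<bar>lam\<bar> \<le> w" using h3 unfolding w_def nn_def .
    have qw: "nn powr (3/4) / m = w" unfolding m_def w_def using np by (simp add: powr_diff[symmetric])
    have Jr: "real J \<le> nn powr (3/4)" unfolding J_def
      using np by (simp add: of_nat_nat) 
    have Jw: "real J / m \<le> w" using Jr m0 qw by (metis divide_right_mono less_imp_le)
    have Jr2: "nn powr (3/4) < real (Suc J)" unfolding J_def using np by (simp add: of_nat_nat) linarith
    have wJ: "w < real (Suc J) / m" using Jr2 m0 qw by (metis divide_strict_right_mono)
    have w2: "w^2 = nn powr (1/6)" unfolding w_def using np by (simp add: powr_pow')
    have w3e: "w^3 = nn powr (1/4)" unfolding w_def using np by (simp add: powr_pow')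
    have wh: "w^2 / m \<le> eta" unfolding w2 m_def eta_def using np by (simp add: powr_diff[symmetric])
    have eta_eq: "eta = 1 / sqrt nn" unfolding eta_def using np
      by (simp add: powr_minus_divide powr_half_sqrt[symmetric])
    have sq: "sqrt nn \<ge> 2 * (r + 18)"
      using real_sqrt_le_mono[OF nbig] r0 by simp
    have et: "eta * (r + 18) \<le> 1/2"
    proof -
      have sp: "sqrt nn > 0" using np by simp
      have "eta * (r + 18) = (r + 18) / sqrt nn" unfolding eta_eq by simp
      also have "\<dots> \<le> 1/2" using sq sp by (simp add: divide_le_eq)
      finally show ?thesis .
    qed
    have w3: "w^3 * eta \<le> 1"
    proof -
      have "w^3 * eta = nn powr (- (1/4))" unfolding w3e eta_def using np by (simp add: powr_add[symmetric])
      also have "\<dots> = 1 / nn powr (1/4)" by (simp add: powr_minus_divide)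
      also have "\<dots> \<le> 1" using ge_one_powr_ge_zero[of nn "1/4"] n1 by simp
      finally show ?thesis .
    qed
    note M = MAIN[OF r0 m0 kJ x1 lx lw w1 Jw wJ wh et w3]
    define x where "x = real k / m"
    have x0: "x > 0" using x1 x_def by simp
    have Gdx: "Gd lam x > 0" using Gd_pos[of x lam] x1 lx x_def by simp
    have geq: "(real k / m) powr r / deriv (G lam) (real k / m) * exp (- G lam (real k / m)) = gg r lam x"
      unfolding x_def deriv_G gg_def ff_def by simp
    have gpos: "gg r lam x \<ge> 0" unfolding gg_def ff_def using Gdx by simp
    have m3: "m^3 = nn^2" unfolding m_def using np by (simp add: powr_pow' powr_realpow)
    have x3: "1 / x^3 = nn^2 / real k^3" unfolding x_def using m3 by (simp add: power_divide)
    have wp: "w powr (r - 2) = nn powr ((r - 2) / 12)" unfolding w_def by (simp add: powr_powr)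
    have Seq: "(1/m) * (\<Sum>j = k..J. (real j / m) powr r * exp (- G lam (real j / m)))
        = (1/m) * (\<Sum>j = k..J. ff r lam (real j / m))" unfolding ff_def by simp
    have main: "\<bar>(1/m) * (\<Sum>j = k..J. (real j / m) powr r * exp (- G lam (real j / m))) - gg r lam x\<bar>
       \<le> A * gg r lam x * (nn^2 / real k^3) + B * nn powr ((r - 2) / 12) * exp (- G lam w)"
    proof -
      have M': "\<bar>(1/m) * (\<Sum>j = k..J. ff r lam (real j / m)) - gg r lam x\<bar>
         \<le> A * gg r lam x / x^3 + B * w powr (r - 2) * exp (- G lam w)"
        using M by (simp only: A_def B_def x_def)
      have "A * gg r lam x / x^3 = A * gg r lam x * (1 / x^3)" by simp
      also have "\<dots> = A * gg r lam x * (nn^2 / real k^3)" by (simp only: x3)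
      finally have e: "A * gg r lam x / x^3 = A * gg r lam x * (nn^2 / real k^3)" .
      show ?thesis using M' unfolding Seq e wp .
    qed
    have "A * gg r lam x * (nn^2 / real k^3) \<le> C * gg r lam x * (nn^2 / real k^3)"
      using CA gpos by (intro mult_right_mono) auto
    moreover have "B * nn powr ((r - 2) / 12) * exp (- G lam w) \<le> C * nn powr ((r - 2) / 12) * exp (- G lam w)"
      using CB by (intro mult_right_mono) auto
    ultimately have fin: "\<bar>(1/m) * (\<Sum>j = k..J. (real j / m) powr r * exp (- G lam (real j / m))) - gg r lam x\<bar>
       \<le> C * \<bar>gg r lam x\<bar> * (nn^2 / real k^3) + C * nn powr ((r - 2) / 12) * exp (- G lam w)"
      using main gpos by simp
    show "let m = real n powr (2/3);
         S = (1 / m) * (\<Sum>j = k..nat \<lfloor>real n powr (3/4)\<rfloor>.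
                 (real j / m) powr r * exp (- G lam (real j / m)));
         g = (real k / m) powr r / deriv (G lam) (real k / m) * exp (- G lam (real k / m))
     in \<bar>S - g\<bar> \<le> C * \<bar>g\<bar> * (real n ^ 2 / real k ^ 3)
            + C * real n powr ((r - 2) / 12) * exp (- G lam (real n powr (1/12)))"
      unfolding Let_def using fin geq unfolding m_def[symmetric] nn_def[symmetric] J_def[symmetric] w_def[symmetric]
        x_def by simp
  qed
qed

end
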